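(* Let $A$ be a real $n\times n$ matrix, $\alpha>0$, and $F_{A,\alpha}(u)=|u|^\alpha Au$ for $u\in\mathbb R^n$. If $$\frac{\mathrm{Tr}(A)}{|A|}\ge\sqrt{n-\frac1{(1+\alpha)^2}},$$ then $F_{A,\alpha}$ is monotone. If the inequality is strict, then $F_{A,\alpha}$ is $(\alpha+2)$-monotone.
   Context: $|u|$ is the Euclidean norm of $u$; for a matrix $A=(a_{ij})$, $|A|=(\sum_{i,j}a_{ij}^2)^{1/2}$ and $\mathrm{Tr}$ is the trace. A map $F:\mathbb R^n\to\mathbb R^n$ is monotone if $(F(u)-F(v))\cdot(u-v)\ge0$ for all $u,v$; for $\beta>0$ it is $\beta$-monotone if there is $C>0$ with $(F(u)-F(v))\cdot(u-v)\ge C|u-v|^\beta$ for all $u,v$. *)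

theory Defs
  imports "HOL-Analysis.Analysis"
begin

definition frob_norm :: "real^'n^'n \<Rightarrow> real" where
  "frob_norm A = sqrt (\<Sum>i\<in>UNIV. \<Sum>j\<in>UNIV. (A $ i $ j)^2)"

definition mat_trace :: "real^'n^'n \<Rightarrow> real" where
  "mat_trace A = (\<Sum>i\<in>UNIV. A $ i $ i)"

definition monotone_map :: "(real^'n \<Rightarrow> real^'n) \<Rightarrow> bool" where
  "monotone_map F \<longleftrightarrow> (\<forall>u v. (F u - F v) \<bullet> (u - v) \<ge> 0)"

definition beta_monotone :: "real \<Rightarrow> (real^'n \<Rightarrow> real^'n) \<Rightarrow> bool" where
  "beta_monotone \<beta> F \<longleftrightarrow> (\<exists>C>0. \<forall>u v. (F u - F v) \<bullet> (u - v) \<ge> C * norm (u - v) powr \<beta>)"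

definition F_map :: "real^'n^'n \<Rightarrow> real \<Rightarrow> real^'n \<Rightarrow> real^'n" where
  "F_map A \<alpha> u = (norm u powr \<alpha>) *\<^sub>R (A *v u)"

end

theory Submission
  imports Defs
begin


definition outer :: "real^'n \<Rightarrow> real^'n \<Rightarrow> real^'n^'n" where
  "outer x y = (\<chi> i j. x$i * y$j)"

lemma ifmul: "(if P then 1 else 0) * (a::real) = (if P then a else 0)" by simp

lemma mat1_outer: "mat 1 \<bullet> outer x (y::real^'n) = x \<bullet> y"
  by (simp add: mat_def inner_vec_def outer_def ifmul cong: if_cong)

lemma outer_outer0: "outer x y \<bullet> outer x (y::real^'n) = (x \<bullet> x) * (y \<bullet> y)"
  by (simp add: inner_vec_def outer_def sum_product mult_ac)

lemma outer_outer: "outer x y \<bullet> outer x (y::real^'n) = (norm x)^2 * (norm y)^2"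
  by (simp add: outer_outer0 power2_norm_eq_inner)

lemma frob_eq_norm: "frob_norm (A::real^'n^'n) = norm A"
  unfolding frob_norm_def norm_eq_sqrt_inner by (simp add: inner_vec_def power2_eq_square)

lemma inner_outer: "(A::real^'n^'n) \<bullet> outer x y = x \<bullet> (A *v y)"
  by (simp add: outer_def inner_vec_def matrix_vector_mult_def sum_distrib_left mult_ac)

lemma inner_mat1: "(A::real^'n^'n) \<bullet> mat 1 = mat_trace A"
  by (simp add: mat_def inner_vec_def mat_trace_def if_distrib cong: if_cong)

lemma mat1_mat1: "mat 1 \<bullet> (mat 1 :: real^'n^'n) = real CARD('n)"
  by (simp add: mat_def inner_vec_def if_distrib cong: if_cong)



lemma L1:
  fixes A :: "real^'n^'n" and x y :: "real^'n"
  assumes tr: "mat_trace A = real CARD('n) * t"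
  shows "(x \<bullet> (A *v y) - t*(x\<bullet>y))^2 \<le> ((norm A)^2 - real CARD('n) * t^2) * ((norm x)^2*(norm y)^2 - (x\<bullet>y)^2/real CARD('n))"
    and "(norm A)^2 - real CARD('n) * t^2 \<ge> 0"
proof -
  define n where "n = real CARD('n)"
  have npos: "n > 0" unfolding n_def by simp
  define s where "s = (x\<bullet>y)/n"
  define B where "B = A - t *\<^sub>R mat 1"
  define M where "M = outer x y - s *\<^sub>R mat 1"
  have i1: "mat 1 \<bullet> A = n*t" using tr inner_mat1[of A] by (simp add: inner_commute n_def)
  have i2: "outer x y \<bullet> mat 1 = x \<bullet> y" using mat1_outer by (simp add: inner_commute)
  have BM: "B \<bullet> M = x \<bullet> (A *v y) - t*(x\<bullet>y)"
  proof -
    have "B \<bullet> M = A \<bullet> outer x y - s * (A \<bullet> mat 1) - t * (mat 1 \<bullet> outer x y) + t * s * (mat 1 \<bullet> (mat 1::real^'n^'n))"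
      unfolding B_def M_def by (simp only: inner_diff_left inner_diff_right inner_scaleR_left inner_scaleR_right) (simp add: algebra_simps)
    also have "\<dots> = x \<bullet> (A *v y) - t*(x\<bullet>y)"
      using npos by (simp add: inner_outer inner_mat1[of A] mat1_outer mat1_mat1 tr n_def[symmetric] s_def)
    finally show ?thesis .
  qed
  have BB: "(norm B)^2 = (norm A)^2 - n * t^2"
  proof -
    have "(norm B)^2 = A \<bullet> A - 2 * t * (A \<bullet> mat 1) + t * t * (mat 1 \<bullet> (mat 1::real^'n^'n))"
      unfolding B_def power2_norm_eq_inner by (simp only: inner_diff_left inner_diff_right inner_scaleR_left inner_scaleR_right) (simp add: algebra_simps inner_commute)
    also have "\<dots> = (norm A)^2 - n * t^2"
      using mat1_mat1[where 'n='n] dot_square_norm[of A] by (simp add: inner_mat1[of A] tr n_def[symmetric] power2_eq_square)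
    finally show ?thesis .
  qed
  have MM: "(norm M)^2 = (norm x)^2*(norm y)^2 - (x\<bullet>y)^2/n"
  proof -
    have "(norm M)^2 = outer x y \<bullet> outer x y - 2 * s * (x\<bullet>y) + s * s * n"
      unfolding M_def power2_norm_eq_inner
      by (simp only: inner_diff_left inner_diff_right inner_scaleR_left inner_scaleR_right mat1_outer mat1_mat1 i2 n_def[symmetric]) (simp add: algebra_simps)
    also have "\<dots> = (norm x)^2*(norm y)^2 - (x\<bullet>y)^2/n"
      using npos by (simp add: outer_outer s_def field_simps power2_eq_square)
    finally show ?thesis .
  qed
  have "\<bar>B \<bullet> M\<bar> \<le> norm B * norm M" by (rule Cauchy_Schwarz_ineq2)
  hence "(B \<bullet> M)^2 \<le> (norm B * norm M)^2"
    by (metis abs_ge_zero power2_abs power_mono)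
  thus "(x \<bullet> (A *v y) - t*(x\<bullet>y))^2 \<le> ((norm A)^2 - real CARD('n) * t^2) * ((norm x)^2*(norm y)^2 - (x\<bullet>y)^2/real CARD('n))"
    using BM BB MM by (simp add: power_mult_distrib n_def)
  show "(norm A)^2 - real CARD('n) * t^2 \<ge> 0" using BB n_def by (metis zero_le_power2)
qed



lemma L2:
  fixes n c t D E X p :: real
  assumes n: "n \<ge> 1" and c: "0 < c" "c < 1" and t: "t \<ge> 0" and p: "p \<ge> 0" and D: "D \<ge> 0"
    and hD: "(n-c)*D \<le> c*n*t^2" and hX: "c*X \<le> p^2" and CS: "p^2 \<le> X"
    and hE: "(E - t*p)^2 \<le> D*(X - p^2/n)"
  shows "E \<ge> 0"
proof -
  have nc: "n - c > 0" using n c by simp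
  have "p^2 \<le> p^2 * n" using n by (simp add: mult_le_cancel_left1)
  hence "p^2/n \<le> p^2" using n by (simp add: divide_le_eq)
  hence Xn: "X - p^2/n \<ge> 0" using CS by simp
  have "D \<le> c*n*t^2/(n-c)" using hD nc by (simp add: le_divide_eq mult.commute)
  hence "D*(X - p^2/n) \<le> (c*n*t^2/(n-c))*(X - p^2/n)"
    using Xn by (rule mult_right_mono)
  also have "\<dots> = t^2 * (c*(n*X - p^2)/(n-c))" using n nc by (simp add: field_simps)
  also have "\<dots> \<le> t^2 * p^2"
  proof (rule mult_left_mono)
    have "n*(c*X) \<le> n*p^2" using hX n by (intro mult_left_mono) simp_all
    hence "c*(n*X - p^2) \<le> (n-c)*p^2" by (simp add: algebra_simps)
    thus "c*(n*X - p^2)/(n-c) \<le> p^2" using nc by (simp add: divide_le_eq mult.commute)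
  qed simp
  finally have "(E - t*p)^2 \<le> (t*p)^2" using hE by (simp add: power_mult_distrib)
  hence "\<bar>E - t*p\<bar> \<le> \<bar>t*p\<bar>" using abs_le_square_iff by blast
  moreover have "t*p \<ge> 0" using t p by simp
  ultimately show ?thesis by linarith
qed



lemma L3:
  fixes w h :: "real^'n" and \<alpha> :: real
  assumes a: "\<alpha> > 0"
  defines "y \<equiv> (norm w)^2 *\<^sub>R h + (\<alpha>*(w\<bullet>h)) *\<^sub>R w"
  shows "h \<bullet> y \<ge> 0" and "(1/(1+\<alpha>)^2) * ((norm h)^2 * (norm y)^2) \<le> (h \<bullet> y)^2"
proof -
  define W where "W = w \<bullet> w"
  define H where "H = h \<bullet> h"
  define d where "d = (w \<bullet> h)^2"
  have W0: "W \<ge> 0" and H0: "H \<ge> 0" and d0: "d \<ge> 0" by (simp_all add: W_def H_def d_def)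
  have nw: "(norm w)^2 = W" by (simp add: W_def dot_square_norm)
  have nh: "(norm h)^2 = H" by (simp add: H_def dot_square_norm)
  have dWH: "d \<le> W*H" 
  proof -
    have "\<bar>w \<bullet> h\<bar> \<le> norm w * norm h" by (rule Cauchy_Schwarz_ineq2)
    hence "\<bar>w \<bullet> h\<bar>^2 \<le> (norm w * norm h)^2" by (intro power_mono) simp_all
    thus ?thesis unfolding d_def using nw nh by (simp add: power_mult_distrib)
  qed
  have yd: "y = W *\<^sub>R h + (\<alpha>*(w\<bullet>h)) *\<^sub>R w" unfolding y_def nw ..
  have hy: "h \<bullet> y = W*H + \<alpha>*d"
    unfolding yd H_def d_def by (simp add: inner_add_right inner_commute power2_eq_square)
  have yy: "(norm y)^2 = W*W*H + (2*\<alpha> + \<alpha>^2)*W*d"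
  proof -
    have "(norm y)^2 = y \<bullet> y" by (simp add: dot_square_norm)
    also have "\<dots> = W*W*H + (2*\<alpha> + \<alpha>^2)*W*d"
      unfolding yd H_def d_def W_def
      by (simp add: inner_add_right inner_add_left inner_commute power2_eq_square algebra_simps)
    finally show ?thesis .
  qed
  show "h \<bullet> y \<ge> 0" using hy W0 H0 d0 a by simp
  have key: "H * (W*W*H + (2*\<alpha> + \<alpha>^2)*W*d) \<le> (1+\<alpha>)^2 * (W*H + \<alpha>*d)^2"
  proof -
    have "(1+\<alpha>)^2 * (W*H + \<alpha>*d)^2 - H * (W*W*H + (2*\<alpha> + \<alpha>^2)*W*d)
       = (2*\<alpha> + \<alpha>^2)*(W*H)^2 + (2*\<alpha>*(1+\<alpha>)^2 - 2*\<alpha> - \<alpha>^2)*(W*H)*d + (1+\<alpha>)^2*\<alpha>^2*d^2"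
      by (simp add: algebra_simps power2_eq_square)
    also have "\<dots> \<ge> 0"
    proof -
      have "2*\<alpha>*(1+\<alpha>)^2 - 2*\<alpha> - \<alpha>^2 \<ge> 0" using a by (simp add: algebra_simps power2_eq_square)
      thus ?thesis using a W0 H0 d0 by (intro add_nonneg_nonneg mult_nonneg_nonneg) simp_all
    qed
    finally show ?thesis by simp
  qed
  have ap: "(1+\<alpha>)^2 > 0" using a by simp
  show "(1/(1+\<alpha>)^2) * ((norm h)^2 * (norm y)^2) \<le> (h \<bullet> y)^2"
    using key ap unfolding hy yy nh by (simp add: divide_le_eq mult.commute)
qed



lemma pointwise:
  fixes A :: "real^'n^'n" and \<alpha> t :: real and w h :: "real^'n"
  assumes a: "\<alpha> > 0" and t: "t \<ge> 0" and tr: "mat_trace A = real CARD('n) * t"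
    and hD: "(real CARD('n) - 1/(1+\<alpha>)^2) * ((norm A)^2 - real CARD('n) * t^2) \<le> (1/(1+\<alpha>)^2) * real CARD('n) * t^2"
  shows "(norm w)^2 * (h \<bullet> (A *v h)) + \<alpha>*(w\<bullet>h)*(h \<bullet> (A *v w)) \<ge> 0"
proof -
  define y where "y = (norm w)^2 *\<^sub>R h + (\<alpha>*(w\<bullet>h)) *\<^sub>R w"
  have e: "h \<bullet> (A *v y) = (norm w)^2 * (h \<bullet> (A *v h)) + \<alpha>*(w\<bullet>h)*(h \<bullet> (A *v w))"
    unfolding y_def by (simp add: matrix_vector_right_distrib matrix_vector_mult_scaleR inner_add_right)
  have c1: "1 < (1+\<alpha>)^2" using a by (intro one_less_power) simp_all
  have c: "0 < 1/(1+\<alpha>)^2" "1/(1+\<alpha>)^2 < (1::real)" using c1 a by (simp_all add: divide_less_eq)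
  have "h \<bullet> (A *v y) \<ge> 0"
  proof (rule L2[where n="real CARD('n)" and c="1/(1+\<alpha>)^2" and t=t and D="(norm A)^2 - real CARD('n) * t^2"
        and X="(norm h)^2*(norm y)^2" and p="h \<bullet> y"])
    show "1 \<le> real CARD('n)" by simp
    show "(h \<bullet> (A *v y) - t * (h \<bullet> y))^2 \<le> ((norm A)^2 - real CARD('n) * t^2) * ((norm h)^2 * (norm y)^2 - (h \<bullet> y)^2 / real CARD('n))"
      by (rule L1(1)[OF tr])
    show "0 \<le> (norm A)^2 - real CARD('n) * t^2" by (rule L1(2)[OF tr])
    show "(h \<bullet> y)^2 \<le> (norm h)^2 * (norm y)^2"
    proof -
      have "\<bar>h \<bullet> y\<bar> \<le> norm h * norm y" by (rule Cauchy_Schwarz_ineq2)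
      hence "\<bar>h \<bullet> y\<bar>^2 \<le> (norm h * norm y)^2" by (intro power_mono) simp_all
      thus ?thesis by (simp add: power_mult_distrib)
    qed
    show "1 / (1 + \<alpha>)^2 * ((norm h)^2 * (norm y)^2) \<le> (h \<bullet> y)^2"
      using L3(2)[OF a, of h w] unfolding y_def .
    show "0 \<le> h \<bullet> y" using L3(1)[OF a, of h w] unfolding y_def .
  qed (use c t hD in auto)
  thus ?thesis using e by simp
qed



lemma sq_powr: "(x::real) \<ge> 0 \<Longrightarrow> (x^2) powr (a/2) = x powr a"
proof (cases "x = 0")
  case False
  assume "x \<ge> 0" with False have "x > 0" by simp
  hence "(x^2) powr (a/2) = (x powr 2) powr (a/2)" by (simp add: powr_realpow)
  also have "\<dots> = x powr a" by (simp add: powr_powr)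
  finally show ?thesis .
qed simp

lemma mono_from_pointwise:
  fixes A :: "real^'n^'n" and \<alpha> :: real
  assumes a: "\<alpha> > 0"
    and pw: "\<And>w h. (norm w)^2 * (h \<bullet> (A *v h)) + \<alpha>*(w\<bullet>h)*(h \<bullet> (A *v w)) \<ge> 0"
  shows "monotone_map (F_map A \<alpha>)"
  unfolding monotone_map_def
proof (intro allI)
  fix u v :: "real^'n"
  define h where "h = u - v"
  define q where "q = (\<lambda>s::real. (v\<bullet>v) + 2 * s * (v\<bullet>h) + s^2*(h\<bullet>h))"
  define g where "g = (\<lambda>s::real. h\<bullet>(A*v v) + s*(h\<bullet>(A*v h)))"
  define \<phi> where "\<phi> = (\<lambda>s. q s powr (\<alpha>/2) * g s)"
  have qw: "q s = (v + s*\<^sub>R h) \<bullet> (v + s*\<^sub>R h)" for s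
    unfolding q_def by (simp add: inner_add_left inner_add_right algebra_simps power2_eq_square inner_commute)
  have gw: "g s = h \<bullet> (A *v (v + s*\<^sub>R h))" for s
    unfolding g_def by (simp add: matrix_vector_right_distrib matrix_vector_mult_scaleR inner_add_right)
  have phiF: "\<phi> s = F_map A \<alpha> (v + s*\<^sub>R h) \<bullet> h" for s
  proof -
    have "q s powr (\<alpha>/2) = norm (v + s*\<^sub>R h) powr \<alpha>"
      using sq_powr[of "norm (v + s*\<^sub>R h)" \<alpha>] by (simp add: qw dot_square_norm)
    thus ?thesis unfolding \<phi>_def F_map_def gw by (simp add: inner_commute)
  qed
  have q0: "q s \<ge> 0" for s unfolding qw by simp
  have cont: "continuous_on S \<phi>" for S
    unfolding \<phi>_def q_def g_def
    by (intro continuous_intros continuous_on_powr') (use q0 a in \<open>auto simp: q_def\<close>)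
  have piece: "\<phi> x \<le> \<phi> y" if xy: "x \<le> y" and pos: "\<And>s. x < s \<Longrightarrow> s < y \<Longrightarrow> q s > 0" for x y
  proof (rule DERIV_nonneg_imp_increasing_open[OF xy _ cont])
    fix s assume "x < s" "s < y"
    hence qs: "q s > 0" by (rule pos)
    have dq: "DERIV q s :> 2*(v\<bullet>h) + 2 * s * (h\<bullet>h)"
      unfolding q_def by (auto intro!: derivative_eq_intros)
    have dg: "DERIV g s :> h\<bullet>(A*v h)"
      unfolding g_def by (auto intro!: derivative_eq_intros)
    have D: "DERIV \<phi> s :> (\<alpha>/2) * q s powr (\<alpha>/2 - of_nat 1) * (2*(v\<bullet>h) + 2 * s * (h\<bullet>h)) * g s + (h\<bullet>(A*v h)) * q s powr (\<alpha>/2)"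
      unfolding \<phi>_def by (rule DERIV_mult[OF DERIV_fun_powr[OF dq qs] dg])
    define w where "w = v + s*\<^sub>R h"
    have wh: "w \<bullet> h = v\<bullet>h + s*(h\<bullet>h)" unfolding w_def by (simp add: inner_add_left)
    have qn: "q s = (norm w)^2" unfolding qw w_def by (simp add: dot_square_norm)
    have split: "q s powr (\<alpha>/2) = q s powr (\<alpha>/2 - 1) * q s"
    proof -
      have "q s powr (\<alpha>/2 - 1) * q s powr 1 = q s powr (\<alpha>/2 - 1 + 1)" by (rule powr_add[symmetric])
      thus ?thesis using qs by simp
    qed
    have "(\<alpha>/2) * q s powr (\<alpha>/2 - of_nat 1) * (2*(v\<bullet>h) + 2 * s * (h\<bullet>h)) * g s + (h\<bullet>(A*v h)) * q s powr (\<alpha>/2)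
        = q s powr (\<alpha>/2 - 1) * ((norm w)^2 * (h \<bullet> (A *v h)) + \<alpha>*(w\<bullet>h)*(h \<bullet> (A *v w)))"
      unfolding wh gw w_def[symmetric] using split unfolding qn by (simp add: algebra_simps)
    also have "\<dots> \<ge> 0" using pw by simp
    finally show "\<exists>y. DERIV \<phi> s :> y \<and> 0 \<le> y" using D by auto
  qed
  have "\<phi> 0 \<le> \<phi> 1"
  proof (cases "\<forall>s. 0 < s \<longrightarrow> s < 1 \<longrightarrow> q s > 0")
    case True thus ?thesis by (intro piece) auto
  next
    case False
    then obtain s0 where s0: "0 < s0" "s0 < 1" "\<not> q s0 > 0" by auto
    hence "q s0 = 0" using q0[of s0] by simp
    hence v0: "v + s0 *\<^sub>R h = 0" unfolding qw by simp
    show ?thesis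
    proof (cases "h = 0")
      case True thus ?thesis unfolding \<phi>_def g_def q_def by simp
    next
      case False
      have pos: "q s > 0" if "s \<noteq> s0" for s
      proof -
        have "v + s *\<^sub>R h = (s - s0) *\<^sub>R h" using v0 by (simp add: algebra_simps eq_neg_iff_add_eq_0[symmetric])
        moreover have "(s - s0) *\<^sub>R h \<noteq> 0" using that False by simp
        ultimately show ?thesis unfolding qw by (metis inner_gt_zero_iff)
      qed
      have "\<phi> 0 \<le> \<phi> s0" using s0 pos by (intro piece) auto
      also have "\<phi> s0 \<le> \<phi> 1" using s0 pos by (intro piece) auto
      finally show ?thesis .
    qed
  qed
  moreover have "v + 1 *\<^sub>R h = u" unfolding h_def by simp
  ultimately show "0 \<le> (F_map A \<alpha> u - F_map A \<alpha> v) \<bullet> (u - v)"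
    using phiF[of 0] phiF[of 1] unfolding h_def[symmetric] by (simp add: inner_diff_left)
qed



lemma G_strong:
  fixes u v :: "real^'n" and \<alpha> :: real
  assumes a: "\<alpha> > 0"
  shows "(norm u powr \<alpha> *\<^sub>R u - norm v powr \<alpha> *\<^sub>R v) \<bullet> (u - v) \<ge> norm (u - v) powr (\<alpha> + 2) / 2 powr (\<alpha> + 1)"
proof -
  define P where "P = norm u powr \<alpha>"
  define Q where "Q = norm v powr \<alpha>"
  define d where "d = norm (u - v)"
  have P0: "P \<ge> 0" and Q0: "Q \<ge> 0" by (simp_all add: P_def Q_def)
  have uu: "u \<bullet> u = (norm u)^2" and vv: "v \<bullet> v = (norm v)^2" by (simp_all add: dot_square_norm)
  have dd: "d^2 = (norm u)^2 + (norm v)^2 - 2*(u\<bullet>v)"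
  proof -
    have "d^2 = (u - v) \<bullet> (u - v)" unfolding d_def by (simp add: dot_square_norm)
    also have "\<dots> = u \<bullet> u + v \<bullet> v - 2*(u\<bullet>v)" by (simp add: inner_diff_left inner_diff_right inner_commute)
    finally show ?thesis unfolding uu vv .
  qed
  have id: "(P *\<^sub>R u - Q *\<^sub>R v) \<bullet> (u - v) = (P+Q)/2 * d^2 + (P - Q)*((norm u)^2 - (norm v)^2)/2"
    unfolding dd by (simp add: inner_diff_left inner_diff_right inner_commute uu vv field_simps)
  have second: "(P - Q)*((norm u)^2 - (norm v)^2) \<ge> 0"
  proof (cases "norm u \<le> norm v")
    case True
    hence "P \<le> Q" unfolding P_def Q_def using a by (intro powr_mono2) simp_all
    moreover have "(norm u)^2 \<le> (norm v)^2" using True by (intro power_mono) simp_all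
    ultimately show ?thesis by (simp add: mult_nonpos_nonpos)
  next
    case False
    hence "Q \<le> P" unfolding P_def Q_def using a by (intro powr_mono2) simp_all
    moreover have "(norm v)^2 \<le> (norm u)^2" using False by (intro power_mono) simp_all
    ultimately show ?thesis by simp
  qed
  have dpow: "d powr \<alpha> \<le> 2 powr \<alpha> * (P + Q)"
  proof -
    define m where "m = max (norm u) (norm v)"
    have "d \<le> norm u + norm v" unfolding d_def by (rule norm_triangle_ineq4)
    also have "\<dots> \<le> 2 * m" unfolding m_def by simp
    finally have "d powr \<alpha> \<le> (2*m) powr \<alpha>" using a by (intro powr_mono2) (simp_all add: d_def)
    also have "\<dots> = 2 powr \<alpha> * m powr \<alpha>" by (simp add: powr_mult m_def)
    also have "m powr \<alpha> \<le> P + Q" unfolding m_def P_def Q_def max_def using P0 Q0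
      by (auto simp: P_def Q_def)
    hence "2 powr \<alpha> * m powr \<alpha> \<le> 2 powr \<alpha> * (P + Q)" by simp
    finally show ?thesis .
  qed
  have "d powr (\<alpha> + 2) / 2 powr (\<alpha> + 1) = (d powr \<alpha>) * d^2 / (2 * 2 powr \<alpha>)"
    by (simp add: powr_add d_def powr_realpow' mult.commute)
  also have "\<dots> \<le> (2 powr \<alpha> * (P + Q)) * d^2 / (2 * 2 powr \<alpha>)"
    using dpow by (intro divide_right_mono mult_right_mono) simp_all
  also have "\<dots> = (P+Q)/2 * d^2" by simp
  also have "\<dots> \<le> (P *\<^sub>R u - Q *\<^sub>R v) \<bullet> (u - v)" unfolding id using second by simp
  finally show ?thesis unfolding P_def Q_def d_def .
qed



lemma trace_shift: "mat_trace (A - e *\<^sub>R mat 1 :: real^'n^'n) = mat_trace A - e * real CARD('n)"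
proof -
  have "mat_trace (A - e *\<^sub>R mat 1) = (A - e *\<^sub>R mat 1) \<bullet> mat 1" by (rule inner_mat1[symmetric])
  also have "\<dots> = A \<bullet> mat 1 - e * (mat 1 \<bullet> (mat 1 :: real^'n^'n))" by (simp only: inner_diff_left inner_scaleR_left)
  also have "\<dots> = mat_trace A - e * real CARD('n)" by (simp only: inner_mat1[of A] mat1_mat1)
  finally show ?thesis .
qed

lemma norm_shift: "(norm (A - e *\<^sub>R mat 1 :: real^'n^'n))^2 = (norm A)^2 - 2 * e * mat_trace A + e^2 * real CARD('n)"
proof -
  have "(norm (A - e *\<^sub>R mat 1))^2 = (A - e *\<^sub>R mat 1) \<bullet> (A - e *\<^sub>R mat 1)" by (simp add: dot_square_norm)
  also have "\<dots> = A \<bullet> A - 2 * e * (A \<bullet> mat 1) + e * e * (mat 1 \<bullet> (mat 1 :: real^'n^'n))"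
    by (simp only: inner_diff_left inner_diff_right inner_scaleR_left inner_scaleR_right) (simp add: algebra_simps inner_commute)
  also have "\<dots> = (norm A)^2 - 2 * e * mat_trace A + e^2 * real CARD('n)"
    by (simp only: inner_mat1[of A] mat1_mat1 dot_square_norm[of A]) (simp add: power2_eq_square)
  finally show ?thesis .
qed

lemma ratio_cond:
  fixes A :: "real^'n^'n" and \<alpha> :: real
  assumes a: "\<alpha> > 0"
    and r: "mat_trace A / frob_norm A \<ge> sqrt (real CARD('n) - 1 / (1 + \<alpha>)^2)"
  defines "t \<equiv> mat_trace A / real CARD('n)"
  shows "t > 0" "mat_trace A = real CARD('n) * t"
    "(real CARD('n) - 1/(1+\<alpha>)^2) * ((norm A)^2 - real CARD('n) * t^2) \<le> (1/(1+\<alpha>)^2) * real CARD('n) * t^2"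
    "mat_trace A / frob_norm A > sqrt (real CARD('n) - 1 / (1 + \<alpha>)^2) \<Longrightarrow>
      (real CARD('n) - 1/(1+\<alpha>)^2) * ((norm A)^2 - real CARD('n) * t^2) < (1/(1+\<alpha>)^2) * real CARD('n) * t^2"
proof -
  define n where "n = real CARD('n)"
  define c where "c = 1/(1+\<alpha>)^2"
  have n1: "n \<ge> 1" unfolding n_def by simp
  have c1: "1 < (1+\<alpha>)^2" using a by (intro one_less_power) simp_all
  have c: "0 < c" "c < 1" unfolding c_def using c1 a by (simp_all add: divide_less_eq)
  have nc: "n - c > 0" using n1 c by simp
  have sq: "sqrt (n - c) > 0" using nc by simp
  have rr: "mat_trace A / norm A \<ge> sqrt (n - c)" using r by (simp add: frob_eq_norm n_def c_def)
  have An: "norm A > 0"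
  proof (rule ccontr)
    assume "\<not> norm A > 0" hence "norm A = 0" by simp
    thus False using rr sq by simp
  qed
  have trA: "mat_trace A \<ge> sqrt (n - c) * norm A" using rr An by (simp add: le_divide_eq)
  hence trpos: "mat_trace A > 0" using sq An by (smt (verit) mult_pos_pos)
  show "t > 0" unfolding t_def using trpos by simp
  show tr: "mat_trace A = real CARD('n) * t" unfolding t_def by simp
  have sqsq: "(sqrt (n - c) * norm A)^2 = (n - c) * (norm A)^2" using nc by (simp add: power_mult_distrib)
  have key: "(n - c) * ((norm A)^2 - n * t^2) \<le> c * n * t^2 \<longleftrightarrow> (n - c) * (norm A)^2 \<le> (n * t)^2"
    by (simp add: algebra_simps power2_eq_square)
  have keys: "(n - c) * ((norm A)^2 - n * t^2) < c * n * t^2 \<longleftrightarrow> (n - c) * (norm A)^2 < (n * t)^2"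
    by (simp add: algebra_simps power2_eq_square)
  have "(sqrt (n - c) * norm A)^2 \<le> (mat_trace A)^2" using trA sq An by (intro power_mono) simp_all
  hence "(n - c) * ((norm A)^2 - n * t^2) \<le> c * n * t^2" using key sqsq tr n_def by simp
  thus "(real CARD('n) - 1/(1+\<alpha>)^2) * ((norm A)^2 - real CARD('n) * t^2) \<le> (1/(1+\<alpha>)^2) * real CARD('n) * t^2"
    by (simp add: n_def c_def)
  assume "mat_trace A / frob_norm A > sqrt (real CARD('n) - 1 / (1 + \<alpha>)^2)"
  hence "mat_trace A / norm A > sqrt (n - c)" by (simp add: frob_eq_norm n_def c_def)
  hence "mat_trace A > sqrt (n - c) * norm A" using An by (simp add: less_divide_eq)
  hence "(sqrt (n - c) * norm A)^2 < (mat_trace A)^2" using sq An by (intro power_strict_mono) simp_all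
  hence "(n - c) * ((norm A)^2 - n * t^2) < c * n * t^2" using keys sqsq tr n_def by simp
  thus "(real CARD('n) - 1/(1+\<alpha>)^2) * ((norm A)^2 - real CARD('n) * t^2) < (1/(1+\<alpha>)^2) * real CARD('n) * t^2"
    by (simp add: n_def c_def)
qed

theorem mainTheorem12:
  fixes A :: "real^'n^'n" and \<alpha> :: real
  assumes "\<alpha> > 0"
  shows "(mat_trace A / frob_norm A \<ge> sqrt (real CARD('n) - 1 / (1 + \<alpha>)^2)
            \<longrightarrow> monotone_map (F_map A \<alpha>))
       \<and> (mat_trace A / frob_norm A > sqrt (real CARD('n) - 1 / (1 + \<alpha>)^2)
            \<longrightarrow> beta_monotone (\<alpha> + 2) (F_map A \<alpha>))"
proof (intro conjI impI)
  note a = assms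
  define n where "n = real CARD('n)"
  define c where "c = 1/(1+\<alpha>)^2"
  define t where "t = mat_trace A / real CARD('n)"
  assume r: "mat_trace A / frob_norm A \<ge> sqrt (real CARD('n) - 1 / (1 + \<alpha>)^2)"
  note rc = ratio_cond[OF a r, folded t_def]
  show "monotone_map (F_map A \<alpha>)"
    by (rule mono_from_pointwise[OF a pointwise[OF a _ rc(2) rc(3)]]) (use rc(1) in simp)
next
  note a = assms
  define n where "n = real CARD('n)"
  define c where "c = 1/(1+\<alpha>)^2"
  define t where "t = mat_trace A / real CARD('n)"
  assume rs: "mat_trace A / frob_norm A > sqrt (real CARD('n) - 1 / (1 + \<alpha>)^2)"
  hence r: "mat_trace A / frob_norm A \<ge> sqrt (real CARD('n) - 1 / (1 + \<alpha>)^2)" by simp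
  note rc = ratio_cond[OF a r, folded t_def]
  have strict: "(n - c) * ((norm A)^2 - n * t^2) < c * n * t^2"
    using rc(4)[OF rs] by (simp add: n_def c_def)
  have n1: "n \<ge> 1" unfolding n_def by simp
  have c1: "1 < (1+\<alpha>)^2" using a by (intro one_less_power) simp_all
  have c: "0 < c" "c < 1" unfolding c_def using c1 a by (simp_all add: divide_less_eq)
  have nc: "n - c > 0" using n1 c by simp
  define D where "D = (norm A)^2 - n * t^2"
  have D0: "D \<ge> 0" unfolding D_def n_def using L1(2)[OF rc(2)] .
  define t' where "t' = sqrt ((n - c) * D / (c * n))"
  have t'0: "t' \<ge> 0" unfolding t'_def using nc c n1 D0 by simp
  have t'sq: "t'^2 = (n - c) * D / (c * n)" unfolding t'_def using nc c n1 D0 by simp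
  have ct': "c * n * t'^2 = (n - c) * D" unfolding t'sq using c n1 by simp
  have "t'^2 < t^2"
  proof -
    have "(n - c) * D / (c * n) < t^2" using strict c n1 unfolding D_def
      by (simp add: divide_less_eq mult.commute mult.left_commute)
    thus ?thesis using t'sq by simp
  qed
  hence t't: "t' < t" using rc(1) t'0 by (smt (verit) power_mono)
  define e where "e = t - t'"
  have e0: "e > 0" unfolding e_def using t't by simp
  define A' where "A' = A - e *\<^sub>R mat 1"
  have trA': "mat_trace A' = n * t'" unfolding A'_def trace_shift rc(2) e_def n_def[symmetric]
    by (simp add: algebra_simps)
  have nA': "(norm A')^2 - n * t'^2 = D" unfolding A'_def norm_shift rc(2) D_def e_def n_def[symmetric]
    by (simp add: algebra_simps power2_eq_square)
  have mono': "monotone_map (F_map A' \<alpha>)"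
  proof (rule mono_from_pointwise[OF a pointwise[OF a t'0]])
    show "mat_trace A' = real CARD('n) * t'" using trA' n_def by simp
    show "(real CARD('n) - 1 / (1 + \<alpha>)^2) * ((norm A')^2 - real CARD('n) * t'^2) \<le> 1 / (1 + \<alpha>)^2 * real CARD('n) * t'^2"
      using nA' ct' by (simp add: n_def[symmetric] c_def[symmetric])
  qed
  have FA: "F_map A \<alpha> u = F_map A' \<alpha> u + e *\<^sub>R (norm u powr \<alpha> *\<^sub>R u)" for u
    unfolding F_map_def A'_def
    by (simp add: matrix_vector_mult_diff_rdistrib scaleR_matrix_vector_assoc[symmetric] algebra_simps)
  show "beta_monotone (\<alpha> + 2) (F_map A \<alpha>)"
    unfolding beta_monotone_def
  proof (intro exI[of _ "e / 2 powr (\<alpha> + 1)"] conjI allI)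
    show "e / 2 powr (\<alpha> + 1) > 0" using e0 by simp
    fix u v :: "real^'n"
    have "(F_map A \<alpha> u - F_map A \<alpha> v) \<bullet> (u - v) =
        (F_map A' \<alpha> u - F_map A' \<alpha> v) \<bullet> (u - v) + e * ((norm u powr \<alpha> *\<^sub>R u - norm v powr \<alpha> *\<^sub>R v) \<bullet> (u - v))"
      unfolding FA by (simp add: inner_diff_left inner_add_left algebra_simps)
    moreover have "(F_map A' \<alpha> u - F_map A' \<alpha> v) \<bullet> (u - v) \<ge> 0" using mono' unfolding monotone_map_def by blast
    moreover have "e * ((norm u powr \<alpha> *\<^sub>R u - norm v powr \<alpha> *\<^sub>R v) \<bullet> (u - v)) \<ge> e * (norm (u - v) powr (\<alpha> + 2) / 2 powr (\<alpha> + 1))"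
      using G_strong[OF a, of u v] e0 by (intro mult_left_mono) simp_all
    ultimately show "e / 2 powr (\<alpha> + 1) * norm (u - v) powr (\<alpha> + 2) \<le> (F_map A \<alpha> u - F_map A \<alpha> v) \<bullet> (u - v)"
      by simp
  qed
qed

end
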